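(* Let $f\in L^1([0,1],[0,\infty))$ and $\varepsilon>0$. Then there exists an orientation preserving diffeomorphism $\phi$ of $[0,1]$ such that, defining $\tilde f:=(f\circ\phi)\dot\phi$ and $\tilde X:=\{\tilde t\in[0,1]\mid\tilde f(\tilde t)>\int_0^1f(t)dt+2\varepsilon\}$, we have $\int_{\tilde X}\tilde f\leq\varepsilon$. *)

theory Defs
  imports "HOL-Analysis.Analysis"
begin

text \<open>C-infinity on a set S (one-sided derivatives at boundary points):
  a tower of successive derivatives D 0 = g, D (n+1) = derivative of D n, within S.\<close>
definition Cinf_on :: "real set \<Rightarrow> (real \<Rightarrow> real) \<Rightarrow> bool" where
  "Cinf_on S g \<longleftrightarrow>
     (\<exists>D :: nat \<Rightarrow> real \<Rightarrow> real. D 0 = g \<and>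
        (\<forall>n. \<forall>x\<in>S. (D n has_real_derivative D (Suc n) x) (at x within S)))"

definition orient_pres_diffeo01 :: "(real \<Rightarrow> real) \<Rightarrow> bool" where
  "orient_pres_diffeo01 \<phi> \<longleftrightarrow>
     bij_betw \<phi> {0..1} {0..1} \<and>
     Cinf_on {0..1} \<phi> \<and>
     Cinf_on {0..1} (inv_into {0..1} \<phi>) \<and>
     mono_on {0..1} \<phi>"

end

theory Submission
  imports Defs
begin


definition dpf :: "(real \<Rightarrow> real) \<Rightarrow> real \<Rightarrow> real" where
  "dpf q = (SOME q'. polynomial_function q' \<and> (\<forall>x. (q has_real_derivative q' x) (at x)))"

lemma dpf:
  assumes "polynomial_function q"
  shows "polynomial_function (dpf q)" "(q has_real_derivative dpf q x) (at x)"
proof -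
  have "\<exists>q'. polynomial_function q' \<and> (\<forall>x. (q has_real_derivative q' x) (at x))"
    using has_real_derivative_polynomial_function[of q] assms
    by (simp add: real_polynomial_function_eq)
  from someI_ex[OF this] show "polynomial_function (dpf q)" "(q has_real_derivative dpf q x) (at x)"
    unfolding dpf_def by auto
qed

lemma Cinf_poly:
  assumes "polynomial_function p"
  shows "Cinf_on S p"
proof -
  have P: "polynomial_function ((dpf ^^ n) p)" for n
    by (induction n) (auto simp: assms dpf)
  have "((dpf ^^ n) p has_real_derivative (dpf ^^ Suc n) p x) (at x within S)" for n x
    using has_field_derivative_at_within[OF dpf(2)[OF P[of n]]] by simp
  moreover have "(dpf ^^ 0) p = p" by simp
  ultimately show ?thesis unfolding Cinf_on_def
    by (intro exI[of _ "\<lambda>n. (dpf ^^ n) p"]) auto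
qed

lemma Cinf_cong:
  assumes "Cinf_on S g" "\<And>x. x \<in> S \<Longrightarrow> g x = h x"
  shows "Cinf_on S h"
proof -
  obtain D where D: "D 0 = g" "\<And>n x. x\<in>S \<Longrightarrow> (D n has_real_derivative D (Suc n) x) (at x within S)"
    using assms(1) unfolding Cinf_on_def by blast
  define D' where "D' n = (if n = 0 then h else D n)" for n
  have "(D' n has_real_derivative D' (Suc n) x) (at x within S)" if "x \<in> S" for n x
  proof (cases n)
    case 0
    have "(h has_real_derivative D (Suc 0) x) (at x within S)"
      by (rule has_field_derivative_transform_within[OF D(2)[OF that, of 0], of 1])
        (use D(1) assms(2) that in auto)
    then show ?thesis using 0 unfolding D'_def by simp
  next
    case (Suc m) then show ?thesis using D(2)[OF that] unfolding D'_def by simp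
  qed
  moreover have "D' 0 = h" unfolding D'_def by simp
  ultimately show ?thesis unfolding Cinf_on_def by blast
qed

lemma Cinf_deriv:
  assumes "\<And>x. x \<in> S \<Longrightarrow> (g has_real_derivative g' x) (at x within S)" "Cinf_on S g'"
  shows "Cinf_on S g"
proof -
  obtain D where D: "D 0 = g'" "\<And>n x. x\<in>S \<Longrightarrow> (D n has_real_derivative D (Suc n) x) (at x within S)"
    using assms(2) unfolding Cinf_on_def by blast
  define D' where "D' n = (case n of 0 \<Rightarrow> g | Suc m \<Rightarrow> D m)" for n
  have "(D' n has_real_derivative D' (Suc n) x) (at x within S)" if "x \<in> S" for n x
  proof (cases n)
    case 0 then show ?thesis using assms(1)[OF that] D(1) unfolding D'_def by simp
  next
    case (Suc m) then show ?thesis using D(2)[OF that] unfolding D'_def by simp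
  qed
  moreover have "D' 0 = g" unfolding D'_def by simp
  ultimately show ?thesis unfolding Cinf_on_def by blast
qed

fun Qs :: "(real \<Rightarrow> real) \<Rightarrow> nat \<Rightarrow> real \<Rightarrow> real" where
  "Qs q0 0 = (\<lambda>x. x)"
| "Qs q0 (Suc n) = (\<lambda>x. dpf (Qs q0 n) x * q0 x - real (2 * n) * Qs q0 n x * dpf q0 x)"

lemma Qs_poly: "polynomial_function q0 \<Longrightarrow> polynomial_function (Qs q0 n)"
proof (induction n)
  case (Suc n)
  have a: "polynomial_function (\<lambda>x. (real (2*n) *\<^sub>R Qs q0 n x) *\<^sub>R dpf q0 x)"
    by (intro polynomial_function_mult polynomial_function_const Suc dpf)
  have b: "polynomial_function (\<lambda>x. dpf (Qs q0 n) x *\<^sub>R q0 x)"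
    by (intro polynomial_function_mult Suc dpf)
  show ?case using a b by (auto intro!: polynomial_function_diff)
qed auto

lemma Cinf_inv:
  assumes q0: "polynomial_function q0" and nz: "\<And>s. s \<in> S \<Longrightarrow> q0 (\<phi> s) \<noteq> 0"
    and der: "\<And>s. s \<in> S \<Longrightarrow> (\<phi> has_real_derivative inverse (q0 (\<phi> s))) (at s within S)"
  shows "Cinf_on S \<phi>"
proof -
  define D where "D n s = Qs q0 n (\<phi> s) * inverse (q0 (\<phi> s)) ^ (2*n)" for n s
  have "(D n has_real_derivative D (Suc n) s) (at s within S)" if s: "s \<in> S" for n s
  proof -
    have h1: "((\<lambda>s. Qs q0 n (\<phi> s)) has_real_derivative dpf (Qs q0 n) (\<phi> s) * inverse (q0 (\<phi> s))) (at s within S)"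
      by (rule DERIV_chain'[OF der[OF s] dpf(2)[OF Qs_poly[OF q0]]])
    have h2: "((\<lambda>s. q0 (\<phi> s)) has_real_derivative dpf q0 (\<phi> s) * inverse (q0 (\<phi> s))) (at s within S)"
      by (rule DERIV_chain'[OF der[OF s] dpf(2)[OF q0]])
    note h3 = DERIV_inverse_fun[OF h2 nz[OF s]]
    note h4 = DERIV_power[OF h3, of "2*n"]
    note h5 = DERIV_mult[OF h1 h4]
    have eq: "a * w * w ^ (2*n) + of_nat (2*n) * (- (b * w * inverse (c ^ Suc (Suc 0))) * w ^ (2*n - Suc 0)) * Q
       = (a * c - real (2*n) * Q * b) * w ^ (2 * Suc n)" if "w = inverse c" "c \<noteq> 0" for a b c w Q :: real
    proof -
      have i2: "inverse (c ^ Suc (Suc 0)) = w * w" using that by (simp add: power2_eq_square)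
      have e1: "a * c * w ^ (2 * Suc n) = a * w * w ^ (2*n)"
      proof -
        have "a * c * w ^ (2 * Suc n) = a * (c * w) * w * w ^ (2*n)" by (simp add: algebra_simps)
        also have "c * w = 1" using that by simp
        finally show ?thesis by simp
      qed
      have e2: "w * (w * w) * w ^ (2*n - Suc 0) * of_nat (2*n) = w ^ (2 * Suc n) * of_nat (2*n)"
      proof (cases n)
        case (Suc m)
        then have "2*n - Suc 0 = Suc (2*m)" "2 * Suc n = Suc (Suc (Suc (Suc (2*m))))" by auto
        then show ?thesis by (simp add: algebra_simps)
      qed simp
      show ?thesis
        unfolding i2 left_diff_distrib e1
        using e2 by (simp add: algebra_simps) metis
    qed
    show ?thesis unfolding D_def
      apply (rule DERIV_cong[OF h5])
      unfolding Qs.simps by (rule eq[OF refl nz[OF s]])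
  qed
  moreover have "D 0 = \<phi>" by (auto simp: D_def)
  ultimately show ?thesis unfolding Cinf_on_def by blast
qed


lemma poly_antideriv:
  assumes "polynomial_function (q :: real \<Rightarrow> real)"
  shows "\<exists>\<psi>. \<forall>x. (\<psi> has_real_derivative q x) (at x)"
proof -
  obtain a n where q: "q = (\<lambda>x. \<Sum>i\<le>n. a i * x^i)"
    using assms by (auto simp: real_polynomial_function_eq[symmetric] real_polynomial_function_iff_sum)
  have "((\<lambda>x. \<Sum>i\<le>n. a i * x ^ Suc i / real (Suc i)) has_real_derivative q x) (at x)" for x
  proof -
    have "((\<lambda>x. \<Sum>i\<le>n. a i * x ^ Suc i / real (Suc i)) has_real_derivative
        (\<Sum>i\<le>n. a i * (real (Suc i) * x ^ (Suc i - Suc 0)) / real (Suc i))) (at x)"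
      by (intro DERIV_sum DERIV_cmult DERIV_cdivide DERIV_pow)
    then show ?thesis unfolding q by simp
  qed
  then show ?thesis by blast
qed

lemma diffeo_from_poly:
  assumes q: "polynomial_function q" and qpos: "\<And>x. x \<in> {-1..2} \<Longrightarrow> q x > 0"
    and d\<psi>: "\<And>x. (\<psi> has_real_derivative q x) (at x)" and \<psi>0: "\<psi> 0 = 0" and \<psi>1: "\<psi> 1 = 1"
  shows "\<exists>\<phi>. orient_pres_diffeo01 \<phi> \<and>
     (\<forall>s\<in>{0..1}. (\<phi> has_real_derivative inverse (q (\<phi> s))) (at s within {0..1})) \<and>
     (\<forall>s\<in>{0..1}. \<phi> s \<in> {0..1} \<and> \<psi> (\<phi> s) = s) \<and> (\<forall>t\<in>{0..1}. \<phi> (\<psi> t) = t)"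
proof -
  have smono: "\<psi> x < \<psi> y" if "-1 \<le> x" "x < y" "y \<le> 2" for x y
    by (rule DERIV_pos_imp_increasing[OF that(2)]) (use that d\<psi> qpos in force)
  have inj: "inj_on \<psi> {-1..2}"
  proof (rule inj_onI)
    fix x y assume xy: "x \<in> {-1..2}" "y \<in> {-1..2}" "\<psi> x = \<psi> y"
    show "x = y"
    proof (rule ccontr)
      assume "x \<noteq> y"
      then have "x < y \<or> y < x" by auto
      then show False using smono[of x y] smono[of y x] xy by auto
    qed
  qed
  have cont: "continuous_on A \<psi>" for A
    using DERIV_isCont[OF d\<psi>] by (simp add: continuous_at_imp_continuous_on)
  define \<phi> where "\<phi> = inv_into {-1..2} \<psi>"
  have a: "\<psi> (-1) < 0" using smono[of "-1" 0] \<psi>0 by simp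
  have b: "\<psi> 2 > 1" using smono[of 1 2] \<psi>1 by simp
  have img: "y \<in> \<psi> ` {-1..2}" if h: "\<psi> (-1) \<le> y" "y \<le> \<psi> 2" for y
  proof -
    obtain x where "x \<ge> -1" "x \<le> 2" "\<psi> x = y"
      using IVT'[of \<psi> "-1" y 2, OF h _ cont] by auto
    then show ?thesis by auto
  qed
  have inv1: "\<psi> (\<phi> y) = y" "\<phi> y \<in> {-1..2}" if "\<psi> (-1) < y" "y < \<psi> 2" for y
  proof -
    have "y \<in> \<psi> ` {-1..2}" using img[of y] that by simp
    then show "\<psi> (\<phi> y) = y" "\<phi> y \<in> {-1..2}"
      unfolding \<phi>_def by (rule f_inv_into_f, rule inv_into_into)
  qed
  have inv2: "\<phi> (\<psi> t) = t" if "t \<in> {-1..2}" for t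
    unfolding \<phi>_def using inv_into_f_f[OF inj that] .
  have in01: "\<phi> s \<in> {0..1}" "\<psi> (\<phi> s) = s" if "s \<in> {0..1}" for s
  proof -
    have s: "\<psi> (-1) < s" "s < \<psi> 2" using that a b by auto
    show eq: "\<psi> (\<phi> s) = s" using inv1[OF s] by simp
    have m: "\<phi> s \<in> {-1..2}" using inv1[OF s] by simp
    show "\<phi> s \<in> {0..1}"
    proof (rule ccontr)
      assume "\<phi> s \<notin> {0..1}"
      then have "\<phi> s < 0 \<or> \<phi> s > 1" by auto
      then show False
      proof
        assume "\<phi> s < 0" then have "\<psi> (\<phi> s) < \<psi> 0" using smono m by auto
        then show False using eq \<psi>0 that by auto
      next
        assume "\<phi> s > 1" then have "\<psi> 1 < \<psi> (\<phi> s)" using smono m by auto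
        then show False using eq \<psi>1 that by auto
      qed
    qed
  qed
  have der: "(\<phi> has_real_derivative inverse (q (\<phi> s))) (at s)" if s: "s \<in> {0..1}" for s
  proof (rule DERIV_inverse_function[where a="\<psi> (-1)" and b="\<psi> 2"])
    show "(\<psi> has_real_derivative q (\<phi> s)) (at (\<phi> s))" by (rule d\<psi>)
    show "q (\<phi> s) \<noteq> 0" using qpos[of "\<phi> s"] in01[OF s] by auto
    show "\<psi> (-1) < s" "s < \<psi> 2" using s a b by auto
    show "\<psi> (\<phi> y) = y" if "\<psi> (-1) < y" "y < \<psi> 2" for y using inv1 that by auto
    have "isCont \<phi> (\<psi> (\<phi> s))"
    proof (rule isCont_inverse_function[where d=1 and f=\<psi> and g=\<phi> and x="\<phi> s"])
      fix z assume "\<bar>z - \<phi> s\<bar> \<le> 1"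
      then have "z \<in> {-1..2}" using in01[OF s] by auto
      then show "\<phi> (\<psi> z) = z" "isCont \<psi> z" using inv2 DERIV_isCont[OF d\<psi>] by auto
    qed simp
    then show "isCont \<phi> s" using in01[OF s] by simp
  qed
  have derw: "\<forall>s\<in>{0..1}. (\<phi> has_real_derivative inverse (q (\<phi> s))) (at s within {0..1})"
    using der has_field_derivative_at_within by blast
  have injphi: "inj_on \<phi> {0..1}"
    by (rule inj_onI) (metis in01(2))
  have imphi: "\<phi> ` {0..1} = {0..1}"
  proof
    show "\<phi> ` {0..1} \<subseteq> {0..1}" using in01 by auto
    show "{0..1} \<subseteq> \<phi> ` {0..1}"
    proof
      fix t :: real assume t: "t \<in> {0..1}"
      have "\<psi> t \<in> {0..1}" using t smono[of 0 t] smono[of t 1] \<psi>0 \<psi>1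
        by (cases "t = 0"; cases "t = 1") auto
      moreover have "\<phi> (\<psi> t) = t" using inv2 t by auto
      ultimately show "t \<in> \<phi> ` {0..1}" by force
    qed
  qed
  have psi01: "\<psi> t \<in> {0..1}" if t: "t \<in> {0..1}" for t
    using t smono[of 0 t] smono[of t 1] \<psi>0 \<psi>1 by (cases "t = 0"; cases "t = 1") auto
  have C1: "Cinf_on {0..1} \<phi>"
  proof (rule Cinf_inv[OF q])
    fix s :: real assume s: "s \<in> {0..1}"
    have "\<phi> s \<in> {-1..2}" using in01(1)[OF s] by auto
    then show "q (\<phi> s) \<noteq> 0" using qpos by fastforce
    show "(\<phi> has_real_derivative inverse (q (\<phi> s))) (at s within {0..1})" using derw s by blast
  qed
  have C\<psi>: "Cinf_on {0..1} \<psi>"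
    by (rule Cinf_deriv[OF _ Cinf_poly[OF q]]) (use d\<psi> has_field_derivative_at_within in blast)
  have C2: "Cinf_on {0..1} (inv_into {0..1} \<phi>)"
  proof (rule Cinf_cong[OF C\<psi>])
    fix t :: real assume t: "t \<in> {0..1}"
    show "\<psi> t = inv_into {0..1} \<phi> t"
      by (rule inv_into_f_eq[OF injphi psi01[OF t], symmetric]) (use inv2 t in auto)
  qed
  have mono: "mono_on {0..1} \<phi>"
  proof (rule mono_onI)
    fix r s :: real assume rs: "r \<in> {0..1}" "s \<in> {0..1}" "r \<le> s"
    show "\<phi> r \<le> \<phi> s"
    proof (rule ccontr)
      assume "\<not> \<phi> r \<le> \<phi> s"
      moreover have "\<phi> s \<in> {0..1}" "\<phi> r \<in> {0..1}" using in01 rs by auto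
      ultimately have "\<psi> (\<phi> s) < \<psi> (\<phi> r)" by (intro smono) auto
      then show False using in01 rs by auto
    qed
  qed
  have "orient_pres_diffeo01 \<phi>"
    unfolding orient_pres_diffeo01_def bij_betw_def using injphi imphi C1 C2 mono by auto
  then show ?thesis using derw in01 inv2 by auto
qed


lemma approx:
  fixes f :: "real \<Rightarrow> real" and \<epsilon> :: real
  assumes fint: "f integrable_on {0..1}" and fnn: "\<forall>t\<in>{0..1}. f t \<ge> 0" and \<epsilon>: "\<epsilon> > 0"
  shows "\<exists>p. polynomial_function p \<and> (\<forall>x\<in>{-1..2}. p x > 0) \<and> integral {0..1} p > 0 \<and>
     (\<lambda>t. if f t > (integral {0..1} f + 2 * \<epsilon>) * (p t / integral {0..1} p) then f t else 0) integrable_on {0..1} \<and>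
     integral {0..1} (\<lambda>t. if f t > (integral {0..1} f + 2 * \<epsilon>) * (p t / integral {0..1} p) then f t else 0) \<le> \<epsilon>"
proof -
  define I where "I = integral {0..1} f"
  have I0: "I \<ge> 0" unfolding I_def by (rule integral_nonneg[OF fint]) (use fnn in auto)
  define J where "J = I + \<epsilon>"
  have J0: "J > 0" using I0 \<epsilon> by (simp add: J_def)
  define c where "c = I + 2 * \<epsilon>"
  have cJ: "c > J" using \<epsilon> by (simp add: c_def J_def)
  define m where "m = \<epsilon> / J"
  have m0: "m > 0" using \<epsilon> J0 by (simp add: m_def)
  define fe where "fe x = (if x \<in> {0..1} then f x else 0)" for x
  have fe_int: "fe integrable_on {a..b}" for a b
  proof -
    have "{0..1} \<inter> {a..b} = {max 0 a..min 1 b}" by auto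
    then have "f integrable_on {0..1} \<inter> {a..b}"
      using integrable_on_subinterval[OF fint, of "max 0 a" "min 1 b"] by auto
    then show ?thesis unfolding fe_def[abs_def] using integrable_restrict_Int by blast
  qed
  have fe_nn: "fe x \<ge> 0" for x using fnn by (simp add: fe_def)
  have feI: "integral {-2..5} fe = I"
  proof -
    have "integral {-2..5} fe = integral ({0..1} \<inter> {-2..5}) f"
      unfolding fe_def[abs_def] by (rule integral_restrict_Int)
    also have "{0..1} \<inter> {-2..5::real} = {0..1}" by auto
    finally show ?thesis by (simp add: I_def)
  qed
  define F where "F t = integral {-2..t} fe" for t
  have Fcont: "continuous_on {-2..5} F"
    unfolding F_def[abs_def] by (rule indefinite_integral_continuous_1[OF fe_int])
  have Fdiff: "F y - F x = integral {x..y} fe" if "-2 \<le> x" "x \<le> y" for x y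
    using Henstock_Kurzweil_Integration.integral_combine[OF that fe_int] by (simp add: F_def)
  have Fmono: "F x \<le> F y" if "-2 \<le> x" "x \<le> y" for x y
    using Fdiff[OF that] integral_nonneg[OF fe_int, of x y] fe_nn by force
  have Fbnd: "0 \<le> F t" "F t \<le> I" if "t \<in> {-2..5}" for t
  proof -
    show "0 \<le> F t" unfolding F_def using integral_nonneg[OF fe_int] fe_nn by blast
    have "F t \<le> integral {-2..5} fe" unfolding F_def
      by (rule integral_subset_le) (use that fe_int fe_nn in auto)
    then show "F t \<le> I" using feI by simp
  qed
  have Fint: "F integrable_on {a..b}" if "-2 \<le> a" "b \<le> 5" for a b
    by (rule integrable_continuous_real, rule continuous_on_subset[OF Fcont]) (use that in auto)
  define r where "r n = inverse (real (Suc n))" for n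
  have r0: "r n > 0" "r n \<le> 1" for n by (auto simp: r_def field_simps)
  have rlim: "r \<longlonglongrightarrow> 0" unfolding r_def[abs_def] by (rule LIMSEQ_inverse_real_of_nat)
  define H where "H n t = (F (r n + t) - F t) / (r n * J) + m" for n t
  have Hcont: "continuous_on {-1..2} (H n)" for n
  proof -
    have "continuous_on {-1..2} (\<lambda>t. F (r n + t))"
      by (rule continuous_on_compose2[OF Fcont]) (use r0[of n] in \<open>auto intro!: continuous_intros\<close>)
    moreover have "continuous_on {-1..2} F" by (rule continuous_on_subset[OF Fcont]) auto
    ultimately show ?thesis unfolding H_def[abs_def] using r0[of n] J0 by (intro continuous_intros) auto
  qed
  have Hge: "H n t \<ge> m" if "t \<in> {-1..2}" for n t
  proof -
    have "F t \<le> F (r n + t)" by (rule Fmono) (use that r0[of n] in auto)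
    then show ?thesis unfolding H_def using r0[of n] J0 by (simp add: divide_nonneg_pos)
  qed
  have "\<forall>n. \<exists>q. polynomial_function q \<and> (\<forall>t\<in>{-1..2}. norm (H n t - q t) < min (m/2) (r n))"
  proof
    fix n
    show "\<exists>q. polynomial_function q \<and> (\<forall>t\<in>{-1..2}. norm (H n t - q t) < min (m/2) (r n))"
      by (rule Stone_Weierstrass_polynomial_function[OF compact_Icc Hcont]) (use m0 r0 in auto)
  qed
  then obtain p where p: "\<And>n. polynomial_function (p n)"
     "\<And>n t. t \<in> {-1..2} \<Longrightarrow> \<bar>H n t - p n t\<bar> < min (m/2) (r n)"
    by (metis real_norm_def)
  have ppos: "p n t > m/2" if "t \<in> {-1..2}" for n t
  proof -
    have "\<bar>H n t - p n t\<bar> < m/2" using p(2)[OF that, of n] by simp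
    then show ?thesis using Hge[OF that, of n] abs_ge_self[of "H n t - p n t"] by linarith
  qed
  have pcont: "continuous_on S (p n)" for n S
    using p(1) continuous_on_polymonial_function by blast
  have pint: "p n integrable_on {0..1}" for n by (rule integrable_continuous_real[OF pcont])
  define G where "G n = integral {0..1} (p n)" for n
  have Gpos: "G n > 0" for n
  proof -
    have "integral {0..1} (\<lambda>t::real. m/2) \<le> G n" unfolding G_def
    proof (rule Henstock_Kurzweil_Integration.integral_le)
      show "(\<lambda>t. m/2) integrable_on {0..1::real}" by (rule integrable_const_ivl)
      show "p n integrable_on {0..1}" by (rule pint)
      show "m/2 \<le> p n x" if "x \<in> {0..1}" for x using ppos[of x n] that by auto
    qed
    then show ?thesis using m0 by simp
  qed
  have Hint: "H n integrable_on {0..1}" for n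
    by (rule integrable_continuous_real, rule continuous_on_subset[OF Hcont]) auto
  have HintLe: "integral {0..1} (H n) \<le> 1" for n
  proof -
    define s where "s = r n"
    have s0: "0 < s" "s \<le> 1" using r0 by (auto simp: s_def)
    have i1: "(\<lambda>t. F (s + t)) integrable_on {0..1}"
      by (rule integrable_continuous_real, rule continuous_on_compose2[OF Fcont])
         (use s0 in \<open>auto intro!: continuous_intros\<close>)
    have i2: "F integrable_on {0..1}" by (rule Fint) auto
    have sh: "integral {0..1} (\<lambda>t. F (s + t)) = integral {s..1+s} F"
      using integral_shift_Icc_real[of 0 1 F s] by (simp add: o_def add.commute)
    have c1: "integral {s..1} F + integral {1..1+s} F = integral {s..1+s} F"
      by (rule Henstock_Kurzweil_Integration.integral_combine) (use s0 Fint in auto)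
    have c2: "integral {0..s} F + integral {s..1} F = integral {0..1} F"
      by (rule Henstock_Kurzweil_Integration.integral_combine) (use s0 Fint in auto)
    have b1: "integral {1..1+s} F \<le> s * I"
    proof -
      have "integral {1..1+s} F \<le> integral {1..1+s} (\<lambda>t::real. I)"
        by (rule Henstock_Kurzweil_Integration.integral_le) (use s0 Fint Fbnd in auto)
      then show ?thesis using s0 by simp
    qed
    have b2: "0 \<le> integral {0..s} F"
      by (rule integral_nonneg) (use s0 Fint Fbnd in auto)
    have D: "integral {0..1} (\<lambda>t. F (s + t) - F t) \<le> s * I"
      using integral_diff[OF i1 i2] sh c1 c2 b1 b2 by linarith
    have "integral {0..1} (H n) = integral {0..1} (\<lambda>t. (F (s + t) - F t) / (s * J) + m)"
      unfolding H_def s_def ..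
    also have "\<dots> = integral {0..1} (\<lambda>t. F (s + t) - F t) / (s * J) + m"
    proof -
      have "(\<lambda>t. F (s + t) - F t) integrable_on {0..1}" using i1 i2 by (rule integrable_diff)
      then have "(\<lambda>t. (F (s + t) - F t) / (s * J)) integrable_on {0..1}"
        by (rule integrable_on_divide)
      then show ?thesis by (subst integral_add) (auto simp: integral_divide)
    qed
    also have "\<dots> \<le> s * I / (s * J) + m"
    proof -
      have "s * J > 0" using s0 J0 by simp
      then have "integral {0..1} (\<lambda>t. F (s + t) - F t) / (s * J) \<le> s * I / (s * J)"
        using D by (rule divide_right_mono[OF _ less_imp_le, rotated])
      then show ?thesis by simp
    qed
    also have "\<dots> = 1"
    proof -
      have "s * I / (s * J) = I / J" using s0 by simp
      moreover have "I / J + \<epsilon> / J = 1" using J0 unfolding J_def by (simp add: add_divide_distrib[symmetric])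
      ultimately show ?thesis by (simp add: m_def)
    qed
    finally show ?thesis .
  qed
  have Gle: "G n \<le> 1 + r n" for n
  proof -
    have "G n \<le> integral {0..1} (\<lambda>t. H n t + r n)" unfolding G_def
    proof (rule Henstock_Kurzweil_Integration.integral_le)
      show "(\<lambda>t. H n t + r n) integrable_on {0..1}" using Hint by (intro integrable_add) auto
      show "p n t \<le> H n t + r n" if "t \<in> {0..1}" for t
        using p(2)[of t n] that abs_ge_self[of "p n t - H n t"] by (auto simp: abs_minus_commute)
    qed (rule pint)
    also have "\<dots> = integral {0..1} (H n) + r n" using Hint by (subst integral_add) auto
    finally show ?thesis using HintLe[of n] by simp
  qed
  obtain N where N: "negligible N"
    "\<And>x e. \<lbrakk>x \<notin> N; 0 < e\<rbrakk> \<Longrightarrow> \<exists>d>0. \<forall>h. 0 < h \<and> h < d \<longrightarrow>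
        norm (integral (cbox x (x + h *\<^sub>R One)) fe /\<^sub>R h ^ DIM(real) - fe x) < e"
    using integrable_ccontinuous_explicit[of fe] fe_int by (metis cbox_interval)
  have Hlim: "(\<lambda>n. H n x) \<longlonglongrightarrow> (f x + \<epsilon>) / J" if x: "x \<in> {0..1}" "x \<notin> N" for x
  proof -
    define A where "A n = integral {x..x + r n} fe / r n" for n
    have HA: "H n x = A n / J + m" for n
    proof -
      have "F (r n + x) - F x = integral {x..x + r n} fe"
        using Fdiff[of x "r n + x"] x r0[of n] by (simp add: add.commute)
      then show ?thesis using r0[of n] J0 by (simp add: H_def A_def)
    qed
    have Alim: "A \<longlonglongrightarrow> f x"
      unfolding tendsto_iff
    proof (intro allI impI)
      fix e :: real assume e: "e > 0"
      obtain d where d: "d > 0" "\<And>h. 0 < h \<and> h < d \<Longrightarrow>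
          norm (integral (cbox x (x + h *\<^sub>R One)) fe /\<^sub>R h ^ DIM(real) - fe x) < e"
        using N(2)[OF x(2) e] by blast
      have d': "\<bar>integral {x..x + h} fe / h - f x\<bar> < e" if "0 < h" "h < d" for h
        using d(2)[of h] that x(1) by (simp add: fe_def divide_inverse_commute)
      have "\<forall>\<^sub>F n in sequentially. r n < d" using order_tendstoD(2)[OF rlim d(1)] .
      then show "\<forall>\<^sub>F n in sequentially. dist (A n) (f x) < e"
        by (rule eventually_mono) (use d' r0 in \<open>auto simp: A_def dist_real_def\<close>)
    qed
    have "(\<lambda>n. A n / J + m) \<longlonglongrightarrow> f x / J + m" using J0 by (intro tendsto_intros Alim) auto
    moreover have "f x / J + m = (f x + \<epsilon>) / J" by (simp add: m_def add_divide_distrib)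
    ultimately show ?thesis using HA by simp
  qed
  have plim: "(\<lambda>n. p n x) \<longlonglongrightarrow> (f x + \<epsilon>) / J" if x: "x \<in> {0..1}" "x \<notin> N" for x
  proof -
    have "(\<lambda>n. p n x - H n x) \<longlonglongrightarrow> 0"
    proof (rule Lim_null_comparison[OF _ rlim])
      show "\<forall>\<^sub>F n in sequentially. norm (p n x - H n x) \<le> r n"
        using p(2) x(1) by (auto simp: abs_minus_commute intro!: always_eventually less_imp_le)
    qed
    from tendsto_add[OF this Hlim[OF x]] show ?thesis by simp
  qed
  define g where "g n t = (if f t > c * (p n t / G n) then f t else 0)" for n t
  have gint: "g n integrable_on {0..1}" for n
  proof (rule measurable_bounded_by_integrable_imp_integrable[OF _ fint])
    have fm: "f \<in> borel_measurable (lebesgue_on {0..1})" by (rule integrable_imp_measurable[OF fint])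
    have pm: "p n \<in> borel_measurable (lebesgue_on {0..1})"
      by (rule continuous_imp_measurable_on_sets_lebesgue[OF pcont]) auto
    show "g n \<in> borel_measurable (lebesgue_on {0..1})" unfolding g_def[abs_def] using fm pm by measurable
    show "norm (g n x) \<le> f x" if "x \<in> {0..1}" for x using fnn that by (auto simp: g_def)
  qed auto
  have gev: "\<forall>\<^sub>F n in sequentially. g n x = 0" if x: "x \<in> {0..1}" "x \<notin> N" for x
  proof -
    have fx: "f x \<ge> 0" using fnn x by auto
    have "c * ((f x + \<epsilon>) / J) > f x"
    proof -
      have "J * f x \<le> c * f x" using cJ fx by (simp add: mult_right_mono)
      also have "\<dots> < c * (f x + \<epsilon>)" using cJ J0 \<epsilon> by simp
      finally show ?thesis using J0 by (simp add: field_simps)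
    qed
    moreover have "(\<lambda>n. c * p n x / (1 + r n)) \<longlonglongrightarrow> c * ((f x + \<epsilon>) / J) / (1 + 0)"
      by (intro tendsto_intros plim[OF x] rlim) simp
    ultimately have ev: "\<forall>\<^sub>F n in sequentially. c * p n x / (1 + r n) > f x"
      by (auto dest: order_tendstoD)
    show ?thesis
    proof (rule eventually_mono[OF ev])
      fix n assume a: "c * p n x / (1 + r n) > f x"
      have "c * p n x / (1 + r n) \<le> c * (p n x / G n)"
      proof -
        have "p n x > 0" using ppos[of x n] m0 x by auto
        then have "p n x / (1 + r n) \<le> p n x / G n"
          using Gpos[of n] Gle[of n] by (intro divide_left_mono) auto
        then show ?thesis using mult_left_mono[of "p n x / (1 + r n)" "p n x / G n" c] cJ J0 by simp
      qed
      then show "g n x = 0" using a by (simp add: g_def)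
    qed
  qed
  define g' where "g' n t = (if t \<in> N then 0 else g n t)" for n t
  have g'int: "g' n integrable_on {0..1}" for n
    by (rule integrable_spike[OF gint N(1)]) (auto simp: g'_def)
  have g'eq: "integral {0..1} (g n) = integral {0..1} (g' n)" for n
    by (rule integral_spike[OF N(1)]) (auto simp: g'_def)
  have "(\<lambda>n. integral {0..1} (g' n)) \<longlonglongrightarrow> integral {0..1} (\<lambda>t::real. 0::real)"
  proof (rule dominated_convergence(2)[OF g'int fint])
    show "norm (g' n x) \<le> f x" if "x \<in> {0..1}" for n x using fnn that by (auto simp: g'_def g_def)
    show "(\<lambda>n. g' n x) \<longlonglongrightarrow> 0" if "x \<in> {0..1}" for x
    proof (cases "x \<in> N")
      case True then show ?thesis by (simp add: g'_def)
    next
      case False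
      show ?thesis by (rule tendsto_eventually) (use gev[OF that False] in \<open>auto simp: g'_def\<close>)
    qed
  qed
  then have "(\<lambda>n. integral {0..1} (g n)) \<longlonglongrightarrow> 0" using g'eq by simp
  then have "\<forall>\<^sub>F n in sequentially. integral {0..1} (g n) < \<epsilon>" using \<epsilon> by (auto dest: order_tendstoD)
  then obtain n where n: "integral {0..1} (g n) < \<epsilon>" by (auto simp: eventually_sequentially)
  show ?thesis
    apply (rule exI[of _ "p n"])
    using p(1) ppos m0 Gpos[of n] gint[of n] n
    unfolding g_def[abs_def] G_def c_def I_def by (auto intro: less_trans[of 0 "m/2"] less_imp_le)
qed

theorem lemma25:
  fixes f :: "real \<Rightarrow> real" and \<epsilon> :: real
  assumes "f integrable_on {0..1}"
    and "\<forall>t\<in>{0..1}. f t \<ge> 0"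
    and "\<epsilon> > 0"
  shows "\<exists>\<phi> \<phi>' :: real \<Rightarrow> real.
           orient_pres_diffeo01 \<phi> \<and>
           (\<forall>t\<in>{0..1}. (\<phi> has_real_derivative \<phi>' t) (at t within {0..1})) \<and>
           (let ft = (\<lambda>t. f (\<phi> t) * \<phi>' t);
                X = {t\<in>{0..1}. ft t > integral {0..1} f + 2 * \<epsilon>}
            in ft integrable_on X \<and> integral X ft \<le> \<epsilon>)"
proof -
  define c where "c = integral {0..1} f + 2 * \<epsilon>"
  obtain p where p: "polynomial_function p" "\<forall>x\<in>{-1..2}. p x > 0" "integral {0..1} p > 0"
    "(\<lambda>t. if f t > c * (p t / integral {0..1} p) then f t else 0) integrable_on {0..1}"
    "integral {0..1} (\<lambda>t. if f t > c * (p t / integral {0..1} p) then f t else 0) \<le> \<epsilon>"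
    using approx[OF assms] unfolding c_def by blast
  define G where "G = integral {0..1} p"
  obtain P where P: "\<And>x. (P has_real_derivative p x) (at x)" using poly_antideriv[OF p(1)] by blast
  have "(p has_integral P 1 - P 0) {0..1}"
    by (rule fundamental_theorem_of_calculus)
       (auto simp: has_real_derivative_iff_has_vector_derivative[symmetric] intro: has_field_derivative_at_within P)
  then have GP: "G = P 1 - P 0" unfolding G_def by (rule integral_unique)
  have Gpos: "G > 0" using p(3) G_def by simp
  define q where "q x = p x / G" for x
  have qpoly: "polynomial_function q"
  proof -
    have "polynomial_function (\<lambda>x. inverse G *\<^sub>R p x)"
      by (intro polynomial_function_mult polynomial_function_const p(1))
    then show ?thesis unfolding q_def by (simp add: field_simps)
  qed
  have qpos: "q x > 0" if "x \<in> {-1..2}" for x using p(2) that Gpos by (simp add: q_def)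
  define \<psi> where "\<psi> x = (P x - P 0) / G" for x
  have d\<psi>: "(\<psi> has_real_derivative q x) (at x)" for x
  proof -
    have "((\<lambda>x. (P x - P 0) / G) has_real_derivative (p x - 0) / G) (at x)"
      by (intro DERIV_cdivide DERIV_diff P DERIV_const)
    then show ?thesis unfolding \<psi>_def q_def by simp
  qed
  have \<psi>0: "\<psi> 0 = 0" and \<psi>1: "\<psi> 1 = 1" using Gpos GP by (auto simp: \<psi>_def)
  obtain \<phi> where \<phi>: "orient_pres_diffeo01 \<phi>"
    "\<forall>s\<in>{0..1}. (\<phi> has_real_derivative inverse (q (\<phi> s))) (at s within {0..1})"
    "\<forall>s\<in>{0..1}. \<phi> s \<in> {0..1} \<and> \<psi> (\<phi> s) = s" "\<forall>t\<in>{0..1}. \<phi> (\<psi> t) = t"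
    using diffeo_from_poly[OF qpoly qpos d\<psi> \<psi>0 \<psi>1] by blast
  define \<phi>' where "\<phi>' s = inverse (q (\<phi> s))" for s
  define ft where "ft t = f (\<phi> t) * \<phi>' t" for t
  define X where "X = {t\<in>{0..1}. ft t > c}"
  define F where "F t = (if f t > c * q t then f t else 0)" for t
  have Fint: "F integrable_on {0..1}" using p(4) unfolding F_def q_def G_def .
  have Fle: "integral {0..1} F \<le> \<epsilon>" using p(5) unfolding F_def q_def G_def .
  have Fabs: "F absolutely_integrable_on {0..1}"
    by (rule nonnegative_absolutely_integrable_1[OF Fint]) (use assms(2) in \<open>auto simp: F_def\<close>)
  have img: "\<phi> ` {0..1} = {0..1}" using \<phi>(1) unfolding orient_pres_diffeo01_def bij_betw_def by auto
  have inj: "inj_on \<phi> {0..1}" using \<phi>(1) unfolding orient_pres_diffeo01_def bij_betw_def by auto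
  have cov: "(\<lambda>x. \<bar>\<phi>' x\<bar> * F (\<phi> x)) absolutely_integrable_on {0..1} \<and>
           integral {0..1} (\<lambda>x. \<bar>\<phi>' x\<bar> * F (\<phi> x)) = integral {0..1} F"
    by (rule has_absolute_integral_change_of_variables_1'[THEN iffD2])
       (use \<phi>(2) inj img Fabs in \<open>auto simp: \<phi>'_def\<close>)
  have eqX: "\<bar>\<phi>' s\<bar> * F (\<phi> s) = (if s \<in> X then ft s else 0)" if s: "s \<in> {0..1}" for s
  proof -
    have "\<phi> s \<in> {0..1}" using \<phi>(3) s by blast
    then have qp: "q (\<phi> s) > 0" by (intro qpos) auto
    have "ft s > c \<longleftrightarrow> f (\<phi> s) > c * q (\<phi> s)"
      using qp by (simp add: ft_def \<phi>'_def field_simps)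
    then show ?thesis using qp s by (auto simp: X_def F_def ft_def \<phi>'_def)
  qed
  have int1: "(\<lambda>s. if s \<in> X then ft s else 0) integrable_on {0..1}"
  proof (rule integrable_eq)
    show "(\<lambda>x. \<bar>\<phi>' x\<bar> * F (\<phi> x)) integrable_on {0..1}"
      using cov absolutely_integrable_on_def by blast
  qed (use eqX in auto)
  have XS: "X \<inter> {0..1} = X" by (auto simp: X_def)
  have "ft integrable_on X" using int1 integrable_restrict_Int[where S=X and f=ft and T="{0..1}"] XS by simp
  moreover have "integral X ft \<le> \<epsilon>"
  proof -
    have "integral X ft = integral {0..1} (\<lambda>s. if s \<in> X then ft s else 0)"
      using integral_restrict_Int[where S=X and f=ft and T="{0..1}"] XS by simp
    also have "\<dots> = integral {0..1} (\<lambda>x. \<bar>\<phi>' x\<bar> * F (\<phi> x))"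
      by (rule integral_cong) (use eqX in auto)
    also have "\<dots> \<le> \<epsilon>" using cov Fle by simp
    finally show ?thesis .
  qed
  ultimately show ?thesis
    using \<phi>(1,2) unfolding Let_def ft_def[abs_def] X_def c_def \<phi>'_def[symmetric]
    by (intro exI[of _ \<phi>] exI[of _ \<phi>']) (auto simp: ft_def c_def)
qed

end
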